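(* Let $M=p_1^{n_1}\cdots p_K^{n_K}$ with distinct primes and $n_\nu\in\mathbb{N}$, let $A\oplus B=\mathbb{Z}_M$, and fix $i$. Assume $0\in B$, and that there is $a_0\in A$ such that for every $a\in A\cap\Pi(a_0,p_i^{n_i-1})$ the fiber $a*F_i$ splits with parity $(B,A)$. Then for every $\nu\in\{1,\dots,p_i-1\}$, $$|A\cap\Pi(a_0,p_i^{n_i})|=|A\cap\Pi(a_0+\nu M/p_i,p_i^{n_i})|.$$ Consequently, $\Phi_{p_i^{n_i}}$ divides the mask polynomial of $A\cap\Pi(a_0,p_i^{n_i-1})$.
   Context: $A\oplus B=\mathbb{Z}_M$ means every element of $\mathbb{Z}_M$ is uniquely $a+b$ with $a\in A$, $b\in B$. The mask polynomial of $Y\subset\mathbb{Z}_M$ (viewed in $\{0,\dots,M-1\}$) is $Y(X)=\sum_{y\in Y}X^y$; $\Phi_s$ is the $s$-th cyclotomic polynomial. $\Pi(y,p_i^\alpha)=\{y'\in\mathbb{Z}_M:p_i^\alpha\mid y-y'\}$. $F_i=\{0,M/p_i,\dots,(p_i-1)M/p_i\}$, $x*F_i=\{x+f:f\in F_i\}$. For $Z\subset\mathbb{Z}_M$, $\Sigma_A(Z)=\{a\in A: a+b\in Z\text{ for some }b\in B\}$, $\Sigma_B(Z)=\{b\in B: a+b\in Z\text{ for some }a\in A\}$. A fiber $Z=x*F_i$ splits with parity $(B,A)$ if $p_i^{n_i}\mid b-b'$ for all $b,b'\in\Sigma_B(Z)$ and, for all distinct $a,a'\in\Sigma_A(Z)$,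 $p_i^{n_i-1}\mid a-a'$ but $p_i^{n_i}\nmid a-a'$. *)

theory Defs
  imports "HOL-Analysis.Analysis" "HOL-Computational_Algebra.Polynomial"
begin

text \<open>Z_M is represented by the natural numbers 0..M-1, with addition modulo M.\<close>

definition tiling :: "nat \<Rightarrow> nat set \<Rightarrow> nat set \<Rightarrow> bool" where
  "tiling M A B \<longleftrightarrow> A \<subseteq> {..<M} \<and> B \<subseteq> {..<M} \<and>
     (\<forall>x<M. \<exists>!ab. ab \<in> A \<times> B \<and> (fst ab + snd ab) mod M = x)"

definition Pi_set :: "nat \<Rightarrow> nat \<Rightarrow> nat \<Rightarrow> nat set" where
  "Pi_set M y q = {y' \<in> {..<M}. int q dvd (int y - int y')}"

definition fiber :: "nat \<Rightarrow> nat \<Rightarrow> nat \<Rightarrow> nat set" where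
  "fiber M p x = {(x + k * (M div p)) mod M | k. k < p}"

definition SigmaA :: "nat \<Rightarrow> nat set \<Rightarrow> nat set \<Rightarrow> nat set \<Rightarrow> nat set" where
  "SigmaA M A B Z = {a \<in> A. \<exists>b\<in>B. (a + b) mod M \<in> Z}"

definition SigmaB :: "nat \<Rightarrow> nat set \<Rightarrow> nat set \<Rightarrow> nat set \<Rightarrow> nat set" where
  "SigmaB M A B Z = {b \<in> B. \<exists>a\<in>A. (a + b) mod M \<in> Z}"

definition splits_BA :: "nat \<Rightarrow> nat set \<Rightarrow> nat set \<Rightarrow> nat \<Rightarrow> nat \<Rightarrow> nat set \<Rightarrow> bool" where
  "splits_BA M A B p n Z \<longleftrightarrow>
     (\<forall>b\<in>SigmaB M A B Z. \<forall>b'\<in>SigmaB M A B Z. int (p ^ n) dvd (int b - int b')) \<and>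
     (\<forall>a\<in>SigmaA M A B Z. \<forall>a'\<in>SigmaA M A B Z. a \<noteq> a' \<longrightarrow>
        int (p ^ (n - 1)) dvd (int a - int a') \<and> \<not> int (p ^ n) dvd (int a - int a'))"

definition mask_poly :: "nat set \<Rightarrow> complex poly" where
  "mask_poly Y = (\<Sum>y\<in>Y. monom 1 y)"

definition cyclotomic :: "nat \<Rightarrow> complex poly" where
  "cyclotomic s = (\<Prod>k\<in>{k. k < s \<and> coprime k s}. [:- cis (2 * pi * real k / real s), 1:])"

end

theory Submission
  imports Defs "HOL-Library.Real_Mod"
begin
lemma cancel2pi: "(2 * pi * (u::real) = 2 * pi * v) \<longleftrightarrow> u = v" "(u * (2 * pi) = v * (2 * pi)) \<longleftrightarrow> u = v"
  by auto

lemma zeta_pow_eq_1: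
  assumes "N > 0" "coprime k N"
  shows "cis (2*pi*real k/real N) ^ t = 1 \<longleftrightarrow> N dvd t"
proof -
  have "cis (2*pi*real k/real N) ^ t = cis (real t * (2*pi*real k/real N))"
    by (rule Complex.DeMoivre)
  also have "\<dots> = cis (of_int (int (t*k)) / of_int (int N) * (2*pi))"
    by (simp add: algebra_simps)
  also have "\<dots> = 1 \<longleftrightarrow> (\<exists>n::int. of_int (int (t*k)) / of_int (int N) * (2*pi) = of_int n * (2*pi))"
    by (rule cis_eq_1_iff)
  also have "\<dots> \<longleftrightarrow> (\<exists>n::int. int (t*k) = n * int N)"
  proof -
    have "of_int (int (t*k)) / of_int (int N) * (2*pi) = of_int n * (2*pi) \<longleftrightarrow> int (t*k) = n * int N" for n::int
    proof -
      have "of_int (int (t*k)) / of_int (int N) * (2*pi) = of_int n * (2*pi) \<longleftrightarrow> (of_int (int (t*k)) / of_int (int N) :: real) = of_int n"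
        by (rule cancel2pi(2))
      also have "\<dots> \<longleftrightarrow> (of_int (int (t*k)) :: real) = of_int n * of_int (int N)"
        using assms(1) by (simp add: field_simps)
      also have "\<dots> \<longleftrightarrow> int (t*k) = n * int N"
        by (metis of_int_eq_iff of_int_mult)
      finally show ?thesis .
    qed
    then show ?thesis by simp
  qed
  also have "\<dots> \<longleftrightarrow> N dvd t*k"
    by (metis dvd_def mult.commute of_nat_dvd_iff)
  also have "\<dots> \<longleftrightarrow> N dvd t"
    using assms(2) by (metis coprime_commute coprime_dvd_mult_left_iff)
  finally show ?thesis .
qed

lemma pow_cong_eq:
  fixes z :: "'a::comm_monoid_mult"
  assumes "z ^ N = 1" "int N dvd int x - int y"
  shows "z ^ x = z ^ y"
proof -
  have key: "z ^ x = z ^ y" if "y \<le> x" "int N dvd int x - int y" for x y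
  proof -
    have "int N dvd int (x - y)" using that by simp
    then obtain t where "x - y = N * t" by (metis dvd_def of_nat_dvd_iff)
    then have "x = y + N * t" using that by simp
    then show ?thesis using assms(1) by (simp add: power_add power_mult)
  qed
  show ?thesis
  proof (cases "y \<le> x")
    case True then show ?thesis using key assms by blast
  next
    case False
    have "int N dvd int y - int x" using assms(2) by (metis dvd_minus_iff minus_diff_eq)
    then show ?thesis using key False by (metis nat_le_linear)
  qed
qed

lemma mod_eq_iff_int_dvd: "(x::nat) mod M = y mod M \<longleftrightarrow> int M dvd int x - int y"
  by (metis mod_eq_dvd_iff of_nat_eq_iff of_nat_mod)

lemma dvd_mod_diff: "N dvd M \<Longrightarrow> int N dvd int (x mod M) - int x"
proof -
  assume "N dvd M"
  have "int M dvd int (x mod M) - int x" using mod_eq_iff_int_dvd[of "x mod M" M x] by simp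
  then show ?thesis using \<open>N dvd M\<close> by (meson dvd_trans of_nat_dvd_iff)
qed

lemma prod_roots_dvd:
  fixes f :: "'b \<Rightarrow> complex"
  assumes "finite S" "inj_on f S" "\<forall>k\<in>S. poly P (f k) = 0"
  shows "(\<Prod>k\<in>S. [:- f k, 1:]) dvd P"
  using assms
proof (induction S arbitrary: P rule: finite_induct)
  case empty then show ?case by simp
next
  case (insert x S)
  have xS: "x \<notin> S" using insert.hyps(2) .
  have inj: "inj_on f (insert x S)" using insert.prems(1) .
  have rts: "\<forall>k\<in>insert x S. poly P (f k) = 0" using insert.prems(2) .
  have "poly P (f x) = 0" using rts by simp
  then have "[:- f x, 1:] dvd P" by (simp add: poly_eq_0_iff_dvd)
  then obtain Q where Q: "P = [:- f x, 1:] * Q" by (elim dvdE)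
  have "\<forall>k\<in>S. poly Q (f k) = 0"
  proof
    fix k assume kS: "k \<in> S"
    have "f k \<noteq> f x"
    proof
      assume "f k = f x"
      then have "k = x" using inj_onD[OF inj] kS by blast
      then show False using kS xS by simp
    qed
    moreover have "poly P (f k) = 0" using rts kS by simp
    ultimately show "poly Q (f k) = 0" using Q by simp
  qed
  moreover have "inj_on f S" using inj by (rule inj_on_subset) blast
  ultimately have "(\<Prod>k\<in>S. [:- f k, 1:]) dvd Q" using insert.IH by blast
  then have "[:- f x, 1:] * (\<Prod>k\<in>S. [:- f k, 1:]) dvd [:- f x, 1:] * Q" by (rule mult_dvd_mono[OF dvd_refl])
  then show ?case using Q insert.hyps by simp
qed


lemma cis_root_inj:
  assumes "N > 0" "k < N" "l < N" "cis (2*pi*real k/real N) = cis (2*pi*real l/real N)"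
  shows "k = l"
proof -
  have "cis (2*pi*real k/real N - 2*pi*real l/real N) = 1"
    using assms(4) by (simp add: cis_divide[symmetric])
  then obtain z :: int where z: "2*pi*real k/real N - 2*pi*real l/real N = of_int z * (2*pi)"
    using cis_eq_1_iff by blast
  have "real k - real l = of_int z * real N"
  proof -
    have "2*pi*((real k - real l)/real N) = 2 * pi * of_int z" using z by (simp add: algebra_simps diff_divide_distrib)
    then have "(real k - real l)/real N = of_int z" by (simp only: cancel2pi(1))
    then show ?thesis using assms(1) by (simp add: field_simps)
  qed
  moreover have "\<bar>real k - real l\<bar> < real N" using assms(2,3) by linarith
  ultimately have "\<bar>of_int z\<bar> * real N < 1 * real N"
    by (simp add: abs_mult)
  then have "\<bar>of_int z :: real\<bar> < 1" using assms(1) mult_less_cancel_right_pos[of "real N" "\<bar>of_int z\<bar>" 1] by simp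
  then have "z = 0" by linarith
  then show ?thesis using \<open>real k - real l = of_int z * real N\<close> by simp
qed

theorem lemma4p8:
  fixes M p a0 :: nat and A B :: "nat set"
  assumes "M \<ge> 1"
    and "prime p" and "p dvd M"
    and "tiling M A B"
    and "0 \<in> B"
    and "a0 \<in> A"
    and "\<forall>a \<in> A \<inter> Pi_set M a0 (p ^ (multiplicity p M - 1)).
           splits_BA M A B p (multiplicity p M) (fiber M p a)"
  shows "(\<forall>\<nu> \<in> {1..p - 1}.
            card (A \<inter> Pi_set M a0 (p ^ multiplicity p M)) =
            card (A \<inter> Pi_set M ((a0 + \<nu> * (M div p)) mod M) (p ^ multiplicity p M)))
         \<and> cyclotomic (p ^ multiplicity p M) dvd
             mask_poly (A \<inter> Pi_set M a0 (p ^ (multiplicity p M - 1)))"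
proof -
  define n where "n = multiplicity p M"
  define N where "N = p ^ n"
  define D where "D = M div p"
  define T where "T j = A \<inter> Pi_set M ((a0 + j * D) mod M) N" for j
  define S where "S = A \<inter> Pi_set M a0 (p ^ (n - 1))"
  have M0: "M > 0" using assms(1) by simp
  have p1: "p > 1" using assms(2) prime_gt_1_nat by blast
  have n1: "n \<ge> 1" unfolding n_def using assms(2,3) M0 prime_multiplicity_gt_zero_iff[of p M] by simp
  have NM: "N dvd M" unfolding N_def n_def by (rule multiplicity_dvd)
  obtain m where Mm: "M = N * m" and pm: "\<not> p dvd m"
  proof -
    have "M \<noteq> 0" "\<not> is_unit p" using M0 assms(2) by (auto simp: not_prime_unit)
    from multiplicity_decompose'[OF this] obtain y where "M = p ^ multiplicity p M * y" "\<not> p dvd y" by blast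
    then show ?thesis using that unfolding N_def n_def by blast
  qed
  have Np: "N = p ^ (n - 1) * p" unfolding N_def using n1
    by (metis Suc_diff_le diff_Suc_1 power_Suc2)
  have D_eq: "D = p ^ (n - 1) * m" unfolding D_def Mm Np using p1 by simp
  have pD: "p * D = M" unfolding D_eq Mm Np by simp
  have AM: "A \<subseteq> {..<M}" and BM: "B \<subseteq> {..<M}"
    and tile: "\<forall>x<M. \<exists>!ab. ab \<in> A \<times> B \<and> (fst ab + snd ab) mod M = x"
    using assms(4) unfolding tiling_def by auto
  have a0M: "a0 < M" using AM assms(6) by auto
  have N1D: "int (p ^ (n - 1)) dvd int D" unfolding D_eq by simp
  have N1N: "int (p ^ (n - 1)) dvd int N" unfolding Np by simp
  have finT: "finite (T j)" for j unfolding T_def using AM finite_subset by blast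
  have splitB: "int N dvd int b" if "a \<in> S" "b \<in> SigmaB M A B (fiber M p a)" for a b
  proof -
    have aA: "a \<in> A" and aM: "a < M" using that AM unfolding S_def by auto
    have "splits_BA M A B p n (fiber M p a)" using assms(7) that(1) unfolding S_def n_def by blast
    then have H: "\<forall>b\<in>SigmaB M A B (fiber M p a). \<forall>b'\<in>SigmaB M A B (fiber M p a). int N dvd (int b - int b')"
      unfolding splits_BA_def N_def by blast
    have "(a + 0 * (M div p)) mod M \<in> fiber M p a" unfolding fiber_def
      by (rule CollectI, rule exI[of _ 0]) (use p1 in simp)
    then have "(a + 0) mod M \<in> fiber M p a" by simp
    then have "0 \<in> SigmaB M A B (fiber M p a)" unfolding SigmaB_def using assms(5) aA by blast
    then show ?thesis using H that(2) by force
  qed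
  have TS: "T j \<subseteq> S" for j
  proof
    fix y assume y: "y \<in> T j"
    then have yA: "y \<in> A" and yM: "y < M" and d1: "int N dvd int ((a0 + j * D) mod M) - int y"
      unfolding T_def Pi_set_def by auto
    have d2: "int N dvd int ((a0 + j * D) mod M) - int (a0 + j * D)" using dvd_mod_diff[OF NM] by blast
    have "int N dvd int (a0 + j * D) - int y" using dvd_diff[OF d1 d2] by simp
    then have "int (p ^ (n - 1)) dvd int (a0 + j * D) - int y" using N1N dvd_trans by blast
    moreover have "int (p ^ (n - 1)) dvd int j * int D" using N1D by simp
    ultimately have "int (p ^ (n - 1)) dvd (int (a0 + j * D) - int y) - int j * int D" by (rule dvd_diff)
    then have "int (p ^ (n - 1)) dvd int a0 - int y" by simp
    then show "y \<in> S" unfolding S_def Pi_set_def using yA yM by simp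
  qed
  have step: "card (T j) \<le> card (T (j + d))" if dp: "d < p" for j d
  proof -
    define g where "g a = (SOME a'. a' \<in> A \<and> (\<exists>b\<in>B. (a' + b) mod M = (a + d * D) mod M))" for a
    have gprop: "g a \<in> A \<and> (\<exists>b\<in>B. (g a + b) mod M = (a + d * D) mod M \<and> int N dvd int b)" if aT: "a \<in> T j" for a
    proof -
      have aS: "a \<in> S" using TS aT by blast
      have "(a + d * D) mod M < M" using M0 by simp
      then obtain ab where ab: "ab \<in> A \<times> B" "(fst ab + snd ab) mod M = (a + d * D) mod M"
        using tile by blast
      then have ex: "\<exists>a'. a' \<in> A \<and> (\<exists>b\<in>B. (a' + b) mod M = (a + d * D) mod M)" by force
      have gA: "g a \<in> A" and "\<exists>b\<in>B. (g a + b) mod M = (a + d * D) mod M"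
        using someI_ex[OF ex] unfolding g_def by auto
      then obtain b where bB: "b \<in> B" and bE: "(g a + b) mod M = (a + d * D) mod M" by blast
      have "(a + d * D) mod M \<in> fiber M p a" unfolding fiber_def D_def using dp by blast
      then have "(g a + b) mod M \<in> fiber M p a" using bE by simp
      then have "\<exists>a'\<in>A. (a' + b) mod M \<in> fiber M p a" using gA by blast
      then have "b \<in> SigmaB M A B (fiber M p a)" unfolding SigmaB_def using bB by simp
      then have "int N dvd int b" using splitB aS by blast
      then show ?thesis using gA bB bE by blast
    qed
    have gT: "g a \<in> T (j + d)" if aT: "a \<in> T j" for a
    proof -
      obtain b where bB: "b \<in> B" and bE: "(g a + b) mod M = (a + d * D) mod M" and Nb: "int N dvd int b"
        and gA: "g a \<in> A"
        using gprop[OF aT] by blast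
      have X1: "int N dvd int ((a0 + (j + d) * D) mod M) - int (a0 + (j + d) * D)"
        using dvd_mod_diff[OF NM] by blast
      have X2: "int N dvd int ((a0 + j * D) mod M) - int (a0 + j * D)"
        using dvd_mod_diff[OF NM] by blast
      have X3: "int N dvd int ((a0 + j * D) mod M) - int a"
        using aT unfolding T_def Pi_set_def by auto
      have "int M dvd int (g a + b) - int (a + d * D)" using bE mod_eq_iff_int_dvd by blast
      then have X4: "int N dvd int (g a + b) - int (a + d * D)" using NM by (meson dvd_trans of_nat_dvd_iff)
      have "int N dvd (int ((a0 + (j + d) * D) mod M) - int (a0 + (j + d) * D))
          - (int ((a0 + j * D) mod M) - int (a0 + j * D)) + (int ((a0 + j * D) mod M) - int a)
          - (int (g a + b) - int (a + d * D)) + int b"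
        by (rule dvd_add[OF dvd_diff[OF dvd_add[OF dvd_diff[OF X1 X2] X3] X4] Nb])
      also have "(int ((a0 + (j + d) * D) mod M) - int (a0 + (j + d) * D))
          - (int ((a0 + j * D) mod M) - int (a0 + j * D)) + (int ((a0 + j * D) mod M) - int a)
          - (int (g a + b) - int (a + d * D)) + int b = int ((a0 + (j + d) * D) mod M) - int (g a)"
        by (simp add: algebra_simps)
      finally show ?thesis unfolding T_def Pi_set_def using gA AM by auto
    qed
    have inj: "inj_on g (T j)"
    proof (rule inj_onI)
      fix a1 a2 assume a1: "a1 \<in> T j" and a2: "a2 \<in> T j" and eq: "g a1 = g a2"
      obtain b1 where b1B: "b1 \<in> B" and b1E: "(g a1 + b1) mod M = (a1 + d * D) mod M"
        using gprop[OF a1] by blast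
      obtain b2 where b2B: "b2 \<in> B" and b2E: "(g a2 + b2) mod M = (a2 + d * D) mod M"
        using gprop[OF a2] by blast
      have Y1: "int M dvd int (g a1 + b1) - int (a1 + d * D)" using b1E mod_eq_iff_int_dvd by blast
      have Y2: "int M dvd int (g a2 + b2) - int (a2 + d * D)" using b2E mod_eq_iff_int_dvd by blast
      have "int M dvd (int (g a2 + b2) - int (a2 + d * D)) - (int (g a1 + b1) - int (a1 + d * D))"
        using Y1 Y2 by (rule dvd_diff[rotated])
      also have "(int (g a2 + b2) - int (a2 + d * D)) - (int (g a1 + b1) - int (a1 + d * D))
         = int (a1 + b2) - int (a2 + b1)" using eq by simp
      finally have "(a1 + b2) mod M = (a2 + b1) mod M" using mod_eq_iff_int_dvd by blast
      have a1A: "a1 \<in> A" and a2A: "a2 \<in> A" using a1 a2 unfolding T_def by auto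
      have "(a1 + b2) mod M < M" using M0 by simp
      then have ex1: "\<exists>!ab. ab \<in> A \<times> B \<and> (fst ab + snd ab) mod M = (a1 + b2) mod M"
        using tile by blast
      have P1: "(a1, b2) \<in> A \<times> B \<and> (fst (a1, b2) + snd (a1, b2)) mod M = (a1 + b2) mod M"
        using a1A b2B by simp
      have P2: "(a2, b1) \<in> A \<times> B \<and> (fst (a2, b1) + snd (a2, b1)) mod M = (a1 + b2) mod M"
        using a2A b1B \<open>(a1 + b2) mod M = (a2 + b1) mod M\<close> by simp
      have "(a1, b2) = (a2, b1)" using ex1 P1 P2 by blast
      then show "a1 = a2" by simp
    qed
    show ?thesis using card_inj_on_le[OF inj] gT finT by blast
  qed
  have Tp: "T p = T 0"
  proof -
    have "(a0 + p * D) mod M = (a0 + 0 * D) mod M" using pD a0M by simp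
    then show ?thesis unfolding T_def by simp
  qed
  have eqcard: "card (T 0) = card (T j)" if "j < p" for j
  proof (cases "j = 0")
    case True then show ?thesis by simp
  next
    case False
    have "card (T 0) \<le> card (T (0 + j))" using step that by blast
    moreover have "p - j < p" using False that by simp
    then have "card (T j) \<le> card (T (j + (p - j)))" using step by blast
    ultimately show ?thesis using Tp that by simp
  qed
  have part1: "\<forall>\<nu> \<in> {1..p - 1}. card (T 0) = card (T \<nu>)"
  proof
    fix \<nu> assume "\<nu> \<in> {1..p - 1}"
    then have "\<nu> < p" using p1 by auto
    then show "card (T 0) = card (T \<nu>)" by (rule eqcard)
  qed
  have cover: "S = (\<Union>j\<in>{..<p}. T j)"
  proof
    show "(\<Union>j\<in>{..<p}. T j) \<subseteq> S" using TS by blast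
  next
    show "S \<subseteq> (\<Union>j\<in>{..<p}. T j)"
    proof
      fix y assume y: "y \<in> S"
      then have yA: "y \<in> A" and yM: "y < M" and "int (p ^ (n - 1)) dvd int a0 - int y"
        unfolding S_def Pi_set_def by auto
      then obtain t where t: "int a0 - int y = int (p ^ (n - 1)) * t" by (auto simp: dvd_def)
      have "coprime p m" using pm assms(2) prime_imp_coprime_nat by blast
      then have "coprime (int m) (int p)" by (simp add: coprime_commute)
      then obtain u v :: int where uv: "u * int m + v * int p = 1"
        using bezout_int[of "int m" "int p"] by auto
      define j where "j = nat ((- t * u) mod int p)"
      have j_int: "int j = (- t * u) mod int p" unfolding j_def using p1 by simp
      have "(- t * u) mod int p < int p" using p1 by simp
      then have "int j < int p" using j_int by simp
      then have jp: "j < p" by simp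
      have "int p dvd (- t * u) - int j" unfolding j_int by (simp add: minus_mod_eq_mult_div)
      then obtain q where q: "(- t * u) - int j = int p * q" by (auto simp: dvd_def)
      have "t + int j * int m = int p * (t * v - q * int m)"
      proof -
        have hj: "int j = - t * u - int p * q" using q by simp
        have e1: "t + int j * int m = t * (1 - u * int m) - int p * q * int m" unfolding hj by (simp add: algebra_simps)
        have e2: "1 - u * int m = v * int p" using uv by linarith
        have "t + int j * int m = t * (v * int p) - int p * q * int m" unfolding e1 e2 ..
        then show ?thesis by (simp add: algebra_simps)
      qed
      then have "int p dvd t + int j * int m" by simp
      then have "int (p ^ (n - 1)) * int p dvd int (p ^ (n - 1)) * (t + int j * int m)"
        by (rule mult_dvd_mono[OF dvd_refl])
      also have "int (p ^ (n - 1)) * (t + int j * int m) = int (a0 + j * D) - int y"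
        using t unfolding D_eq by (simp add: algebra_simps)
      finally have e1: "int N dvd int (a0 + j * D) - int y" unfolding Np by simp
      have e2: "int N dvd int ((a0 + j * D) mod M) - int (a0 + j * D)" using dvd_mod_diff[OF NM] by blast
      have "int N dvd int ((a0 + j * D) mod M) - int y" using dvd_add[OF e1 e2] by simp
      then have "y \<in> T j" unfolding T_def Pi_set_def using yA yM by simp
      then show "y \<in> (\<Union>j\<in>{..<p}. T j)" using jp by blast
    qed
  qed
  have disj: "\<forall>i\<in>{..<p}. \<forall>j\<in>{..<p}. i \<noteq> j \<longrightarrow> T i \<inter> T j = {}"
  proof (intro ballI impI)
    fix i j assume i: "i \<in> {..<p}" and j: "j \<in> {..<p}" and ij: "i \<noteq> j"
    show "T i \<inter> T j = {}"
    proof (rule ccontr)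
      assume "T i \<inter> T j \<noteq> {}"
      then obtain y where yi: "y \<in> T i" and yj: "y \<in> T j" by blast
      have Tk: "int N dvd int (a0 + k * D) - int y" if "y \<in> T k" for k
      proof -
        have d1: "int N dvd int ((a0 + k * D) mod M) - int y" using that unfolding T_def Pi_set_def by auto
        have d2: "int N dvd int ((a0 + k * D) mod M) - int (a0 + k * D)" using dvd_mod_diff[OF NM] by blast
        show ?thesis using dvd_diff[OF d1 d2] by simp
      qed
      have "int N dvd (int (a0 + i * D) - int y) - (int (a0 + j * D) - int y)"
        by (rule dvd_diff[OF Tk[OF yi] Tk[OF yj]])
      also have "(int (a0 + i * D) - int y) - (int (a0 + j * D) - int y)
          = int (p ^ (n - 1)) * ((int i - int j) * int m)" unfolding D_eq by (simp add: algebra_simps)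
      finally have "int (p ^ (n - 1)) * int p dvd int (p ^ (n - 1)) * ((int i - int j) * int m)"
        unfolding Np by simp
      then have "int p dvd (int i - int j) * int m" using p1 by (subst (asm) dvd_mult_cancel_left) auto
      moreover have "\<not> int p dvd int m" using pm by simp
      moreover have "prime (int p)" using assms(2) by simp
      ultimately have "int p dvd int i - int j" using prime_dvd_mult_iff by blast
      then have "int i mod int p = int j mod int p" by (simp add: mod_eq_dvd_iff)
      then have "int i = int j" using i j by simp
      then show False using ij by simp
    qed
  qed
  have N0: "N > 0" unfolding N_def using p1 by simp
  have roots: "poly (mask_poly S) (cis (2 * pi * real k / real N)) = 0" if k: "k < N" "coprime k N" for k
  proof -
    define z where "z = cis (2 * pi * real k / real N)"
    have zN: "z ^ N = 1" unfolding z_def using zeta_pow_eq_1[OF N0 k(2)] by simp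
    define w where "w = z ^ D"
    have w1: "w \<noteq> 1"
    proof
      assume "w = 1"
      then have "N dvd D" unfolding w_def z_def using zeta_pow_eq_1[OF N0 k(2)] by simp
      then have "p ^ (n - 1) * p dvd p ^ (n - 1) * m" unfolding Np D_eq by simp
      then have "p dvd m" using p1 by (simp add: nat_mult_dvd_cancel_disj)
      then show False using pm by simp
    qed
    have Dp: "D * p = N * m" using pD Mm by (simp add: mult.commute)
    have wp: "w ^ p = 1" unfolding w_def power_mult[symmetric] Dp power_mult zN by simp
    have zy: "z ^ y = z ^ a0 * w ^ j" if "y \<in> T j" for y j
    proof -
      have d1: "int N dvd int ((a0 + j * D) mod M) - int y" using that unfolding T_def Pi_set_def by auto
      have d2: "int N dvd int ((a0 + j * D) mod M) - int (a0 + j * D)" using dvd_mod_diff[OF NM] by blast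
      have "int N dvd int y - int (a0 + j * D)"
        using dvd_diff[OF d2 d1] by (simp add: algebra_simps)
      then have "z ^ y = z ^ (a0 + j * D)" by (rule pow_cong_eq[OF zN])
      then show ?thesis unfolding w_def by (simp add: power_add power_mult mult.commute)
    qed
    have finS: "finite S" using TS cover finT by auto
    have "poly (mask_poly S) z = (\<Sum>y\<in>S. z ^ y)"
      unfolding mask_poly_def by (simp add: poly_sum poly_monom)
    also have "\<dots> = (\<Sum>j<p. \<Sum>y\<in>T j. z ^ y)"
      unfolding cover by (rule sum.UNION_disjoint) (use finT disj in auto)
    also have "\<dots> = (\<Sum>j<p. of_nat (card (T 0)) * (z ^ a0 * w ^ j))"
    proof (rule sum.cong[OF refl])
      fix j assume "j \<in> {..<p}"
      then have "(\<Sum>y\<in>T j. z ^ y) = (\<Sum>y\<in>T j. z ^ a0 * w ^ j)" using zy by (intro sum.cong) auto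
      also have "\<dots> = of_nat (card (T j)) * (z ^ a0 * w ^ j)" by simp
      finally show "(\<Sum>y\<in>T j. z ^ y) = of_nat (card (T 0)) * (z ^ a0 * w ^ j)"
        using eqcard \<open>j \<in> {..<p}\<close> by simp
    qed
    also have "\<dots> = of_nat (card (T 0)) * z ^ a0 * (\<Sum>j<p. w ^ j)"
      by (simp add: sum_distrib_left mult.assoc)
    also have "(\<Sum>j<p. w ^ j) = 0" using geometric_sum[OF w1, of p] wp by simp
    finally show ?thesis unfolding z_def by simp
  qed
  have part2: "cyclotomic N dvd mask_poly S"
    unfolding cyclotomic_def
  proof (rule prod_roots_dvd)
    show "finite {k. k < N \<and> coprime k N}" by simp
    show "inj_on (\<lambda>k. cis (2 * pi * real k / real N)) {k. k < N \<and> coprime k N}"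
      using cis_root_inj[OF N0] by (auto intro!: inj_onI)
    show "\<forall>k\<in>{k. k < N \<and> coprime k N}. poly (mask_poly S) (cis (2 * pi * real k / real N)) = 0"
      using roots by blast
  qed
  have T0: "T 0 = A \<inter> Pi_set M a0 N" unfolding T_def using a0M by simp
  show ?thesis using part1 part2
    unfolding T_def S_def N_def n_def D_def by (simp add: mod_less[OF a0M])
qed

end
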